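(* Let $v\equiv 3\pmod 6$. If a $(v,3,2)$-BIBD $(X,\mathcal{A})$ has a strong nesting $\phi:\mathcal{A}\to Y$ with $X\subseteq Y$ and $|Y|=w$, then $w\ge (3v+1)/2$.
   Context: A $(v,k,\lambda)$-BIBD is a pair $(X,\mathcal{A})$ where $X$ is a set of $v$ points and $\mathcal{A}$ is a multiset of $k$-subsets of $X$ (blocks) such that every pair of distinct points lies in exactly $\lambda$ blocks. Given a $(v,k,\lambda)$-BIBD $(X,\mathcal{A})$ and a set $Y\supseteq X$ with $|Y|=w$, a map $\phi:\mathcal{A}\to Y$ is a strong nesting if (1) $\phi(A)\notin A$ for every block $A\in\mathcal{A}$, and (2) the multiset of pairs $\{\{x,\phi(A)\}: A\in\mathcal{A},\ x\in A\}$ (one pair for each block $A$, counted with multiplicity in $\mathcal{A}$, and each $x\in A$) consists of distinct pairs. *)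

theory Defs
  imports Complex_Main
begin

text \<open>The multiset of blocks is represented as an
indexed family B over a finite index set I: each index is one block occurrence, so the
multiset of blocks is the image of B over I (repeated blocks are distinct indices).\<close>
definition bibd :: "'a set \<Rightarrow> 'i set \<Rightarrow> ('i \<Rightarrow> 'a set) \<Rightarrow> nat \<Rightarrow> nat \<Rightarrow> nat \<Rightarrow> bool" where
  "bibd X I B v k lam \<longleftrightarrow>
     finite X \<and> card X = v \<and> finite I \<and>
     (\<forall>i\<in>I. B i \<subseteq> X \<and> card (B i) = k) \<and>
     (\<forall>x\<in>X. \<forall>y\<in>X. x \<noteq> y \<longrightarrow> card {i\<in>I. x \<in> B i \<and> y \<in> B i} = lam)"

definition strong_nesting :: "'i set \<Rightarrow> ('i \<Rightarrow> 'a set) \<Rightarrow> 'a set \<Rightarrow> ('i \<Rightarrow> 'a) \<Rightarrow> bool" where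
  "strong_nesting I B Y phi \<longleftrightarrow>
     (\<forall>i\<in>I. phi i \<in> Y \<and> phi i \<notin> B i) \<and>
     inj_on (\<lambda>(i, x). {x, phi i}) (SIGMA i:I. B i)"

end

theory Submission
  imports Defs
begin

lemma rep_count:
  assumes "bibd X I B v 3 2" and x: "x \<in> X"
  shows "card {i\<in>I. x \<in> B i} = v - 1"
proof -
  from assms(1) have fX: "finite X" and cX: "card X = v" and fI: "finite I"
    and blk: "\<forall>i\<in>I. B i \<subseteq> X \<and> card (B i) = 3"
    and lam: "\<forall>x\<in>X. \<forall>y\<in>X. x \<noteq> y \<longrightarrow> card {i\<in>I. x \<in> B i \<and> y \<in> B i} = 2"
    unfolding bibd_def by auto
  define J where "J = {i\<in>I. x \<in> B i}"
  define S where "S = (SIGMA i:J. B i - {x})"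
  have fJ: "finite J" using fI J_def by auto
  have "card S = (\<Sum>i\<in>J. card (B i - {x}))"
    unfolding S_def by (rule card_SigmaI) (use fJ blk J_def fX in \<open>auto intro: finite_subset\<close>)
  also have "\<dots> = (\<Sum>i\<in>J. 2)"
  proof (rule sum.cong)
    fix i assume "i \<in> J"
    then have "card (B i) = 3" "x \<in> B i" "finite (B i)" using blk J_def fX by (auto intro: finite_subset)
    then show "card (B i - {x}) = 2" by simp
  qed simp
  finally have c1: "card S = 2 * card J" by simp
  define T where "T = (SIGMA y:X-{x}. {i\<in>I. x \<in> B i \<and> y \<in> B i})"
  have "(\<lambda>(i,y). (y,i)) ` S = T"
    unfolding S_def T_def J_def using blk by auto
  moreover have "inj_on (\<lambda>(i,y). (y,i)) S" by (auto simp: inj_on_def)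
  ultimately have "card S = card T" using card_image by fastforce
  also have "card T = (\<Sum>y\<in>X-{x}. card {i\<in>I. x \<in> B i \<and> y \<in> B i})"
    unfolding T_def by (rule card_SigmaI) (use fX fI in auto)
  also have "\<dots> = (\<Sum>y\<in>X-{x}. 2)"
    by (rule sum.cong) (use lam x in auto)
  also have "\<dots> = 2 * (v - 1)" using cX fX x by simp
  finally show ?thesis using c1 J_def by simp
qed

theorem lemma4p2:
  fixes X Y :: "'a set" and I :: "'i set" and B :: "'i \<Rightarrow> 'a set"
    and phi :: "'i \<Rightarrow> 'a" and v w :: nat
  assumes "v mod 6 = 3"
    and "bibd X I B v 3 2"
    and "X \<subseteq> Y" and "finite Y" and "card Y = w"
    and "strong_nesting I B Y phi"
  shows "real w \<ge> (3 * real v + 1) / 2"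
proof -
  note bd = assms(2)
  from assms(2) have fX: "finite X" and cX: "card X = v" and fI: "finite I"
    and blk: "\<forall>i\<in>I. B i \<subseteq> X \<and> card (B i) = 3"
    unfolding bibd_def by auto
  from assms(6) have ph: "\<forall>i\<in>I. phi i \<in> Y \<and> phi i \<notin> B i"
    and inj: "inj_on (\<lambda>(i, x). {x, phi i}) (SIGMA i:I. B i)"
    unfolding strong_nesting_def by auto
  define f where "f = (\<lambda>(i, x). {x, phi i})"
  define Sg where "Sg = (SIGMA i:I. B i)"
  have fB: "\<And>i. i \<in> I \<Longrightarrow> finite (B i)" using blk fX finite_subset by blast
  have fSg: "finite Sg" unfolding Sg_def using fI fB by auto
  have injf: "inj_on f Sg" using inj f_def Sg_def by simp
  define d where "d = w - v"
  have wv: "v \<le> w" using assms(3,4,5) cX card_mono by blast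
  have cYX: "card (Y - X) = d" using assms(3,4,5) cX d_def fX by (simp add: card_Diff_subset)
  define n where "n = (\<lambda>x. card {i\<in>I. phi i = x})"
  have pp: "3 * n x \<le> d" if x: "x \<in> X" for x
  proof -
    define P1 where "P1 = (SIGMA i:{i\<in>I. phi i = x}. B i)"
    define P2 where "P2 = {i\<in>I. x \<in> B i} \<times> {x}"
    have c1: "card P1 = 3 * n x"
    proof -
      have "card P1 = (\<Sum>i\<in>{i\<in>I. phi i = x}. card (B i))"
        unfolding P1_def by (rule card_SigmaI) (use fI fB in auto)
      also have "\<dots> = (\<Sum>i\<in>{i\<in>I. phi i = x}. 3)" by (rule sum.cong) (use blk in auto)
      finally show ?thesis unfolding n_def by simp
    qed
    have c2: "card P2 = v - 1" unfolding P2_def using rep_count[OF bd x] by (simp add: card_cartesian_product)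
    have sub: "P1 \<union> P2 \<subseteq> Sg" unfolding P1_def P2_def Sg_def by auto
    have disj: "P1 \<inter> P2 = {}" unfolding P1_def P2_def using ph by auto
    have fP: "finite P1" "finite P2" using sub fSg finite_subset by blast+
    have "card (P1 \<union> P2) = card (f ` (P1 \<union> P2))"
      using injf sub by (metis card_image inj_on_subset)
    also have "\<dots> \<le> card ((\<lambda>z. {x, z}) ` (Y - {x}))"
    proof (rule card_mono)
      show "finite ((\<lambda>z. {x, z}) ` (Y - {x}))" using assms(4) by simp
      show "f ` (P1 \<union> P2) \<subseteq> (\<lambda>z. {x, z}) ` (Y - {x})"
      proof
        fix s assume "s \<in> f ` (P1 \<union> P2)"
        then obtain i y where iy: "(i,y) \<in> P1 \<union> P2" and s: "s = {y, phi i}" unfolding f_def by auto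
        show "s \<in> (\<lambda>z. {x, z}) ` (Y - {x})"
        proof (cases "(i,y) \<in> P1")
          case True
          then have "i \<in> I" "phi i = x" "y \<in> B i" unfolding P1_def by auto
          then have "y \<in> Y - {x}" "s = {x, y}" using s ph blk assms(3) by auto
          then show ?thesis by blast
        next
          case False
          then have "(i,y) \<in> P2" using iy by blast
          then have "i \<in> I" "y = x" "x \<in> B i" unfolding P2_def by auto
          then have "phi i \<in> Y - {x}" "s = {x, phi i}" using s ph by auto
          then show ?thesis by blast
        qed
      qed
    qed
    also have "\<dots> \<le> card (Y - {x})" by (rule card_image_le) (use assms(4) in simp)
    also have "\<dots> = w - 1" using assms(3,4,5) x by auto
    finally have "card P1 + card P2 \<le> w - 1" using card_Un_disjoint[OF fP disj] by simp
    then show ?thesis using c1 c2 wv d_def x cX fX card_gt_0_iff[of X] by auto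
  qed
  have nle: "n x \<le> d div 3" if "x \<in> X" for x using pp[OF that] by linarith
  define J where "J = {i\<in>I. phi i \<in> X}"
  define In where "In = (SIGMA i:J. B i)"
  define Out where "Out = Sg - In"
  have cIn: "card In = 3 * card J"
  proof -
    have "card In = (\<Sum>i\<in>J. card (B i))"
      unfolding In_def by (rule card_SigmaI) (use fI fB J_def in auto)
    also have "\<dots> = (\<Sum>i\<in>J. 3)" by (rule sum.cong) (use blk J_def in auto)
    finally show ?thesis by simp
  qed
  have cJ: "card J \<le> v * (d div 3)"
  proof -
    have "J = (\<Union>x\<in>X. {i\<in>I. phi i = x})" unfolding J_def by auto
    then have "card J \<le> (\<Sum>x\<in>X. n x)" unfolding n_def using card_UN_le[OF fX] by simp
    also have "\<dots> \<le> (\<Sum>x\<in>X. d div 3)" by (rule sum_mono) (use nle in auto)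
    finally show ?thesis using cX by simp
  qed
  have cOut: "card Out \<le> v * d"
  proof -
    define g where "g = (\<lambda>(i::'i, y::'a). (y, phi i))"
    have "inj_on g Sg"
    proof (rule inj_onI)
      fix p q assume "p \<in> Sg" "q \<in> Sg" "g p = g q"
      then have "f p = f q" unfolding f_def g_def by (auto split: prod.splits)
      then show "p = q" using injf \<open>p \<in> Sg\<close> \<open>q \<in> Sg\<close> inj_onD by metis
    qed
    then have "card Out = card (g ` Out)" unfolding Out_def
      by (metis Diff_subset card_image inj_on_subset)
    also have "\<dots> \<le> card (X \<times> (Y - X))"
      by (rule card_mono) (use fX assms(4) blk ph in \<open>auto simp: g_def Out_def Sg_def In_def J_def\<close>)
    also have "\<dots> = v * d" using cX cYX by (simp add: card_cartesian_product)
    finally show ?thesis .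
  qed
  have cSg: "card Sg = v * (v - 1)"
  proof -
    define T where "T = (SIGMA x:X. {i\<in>I. x \<in> B i})"
    have "(\<lambda>(i,y). (y,i)) ` Sg = T" unfolding Sg_def T_def using blk by auto
    moreover have "inj_on (\<lambda>(i,y). (y,i)) Sg" by (auto simp: inj_on_def)
    ultimately have "card Sg = card T" using card_image by fastforce
    also have "card T = (\<Sum>x\<in>X. card {i\<in>I. x \<in> B i})"
      unfolding T_def by (rule card_SigmaI) (use fX fI in auto)
    also have "\<dots> = (\<Sum>x\<in>X. v - 1)" by (rule sum.cong) (use rep_count[OF bd] in auto)
    finally show ?thesis using cX by simp
  qed
  have "In \<subseteq> Sg" unfolding In_def Sg_def J_def by auto
  then have "card Sg = card In + card Out" unfolding Out_def
    using fSg by (metis card_Diff_subset card_mono le_add_diff_inverse finite_subset)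
  then have "v * (v - 1) \<le> v * (3 * (d div 3)) + v * d" using cSg cIn cJ cOut by simp
  then have "v * (v - 1) \<le> v * (3 * (d div 3) + d)" by (simp add: algebra_simps)
  moreover have "v > 0" using assms(1) by auto
  ultimately have key: "v - 1 \<le> 3 * (d div 3) + d" by simp
  have "v + 1 \<le> 2 * d" using key assms(1) by presburger
  then have "v + 1 + 2 * v \<le> 2 * w" using d_def wv by simp
  then have "3 * v + 1 \<le> 2 * w" by simp
  then have "real (3 * v + 1) \<le> real (2 * w)" by (simp only: of_nat_le_iff)
  then show ?thesis by simp
qed

end
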